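(* Let $d,n\geqslant1$, $N=n+2d+1$, and let $\mathcal{O}$ be the $(d+2)$-angulated cluster category of $A^d_n$ with the Oppermann–Thomas labelling $A\mapsto O_A$, $A\in\mathbf{J}^d_N$. Suppose there are non-zero morphisms $O_A\to O_B$ and $O_B\to O_C$. Then these compose to a non-zero morphism $O_A\to O_C$ if and only if there is a cyclically shifted ordering of $[N]=\{1,\dots,N\}$ with respect to which $$a_0-1\leqslant b_0-1<c_0<a_1-1\leqslant b_1-1<c_1<\dots<a_d-1\leqslant b_d-1<c_d<a_0+n+2d,$$ all entries being read modulo $N$.
   Context: $A^d_n$ is the higher Auslander algebra of type $A$ with basic $d$-cluster-tilting module $M^{(d,n)}$; $\mathcal{U}=\operatorname{add}\{M^{(d,n)}[id]\}\subseteq\mathcal{D}^b(\operatorname{mod}A^d_n)$ and $\mathcal{O}=\mathcal{U}/(\nu_d[-d])$ is the orbit category, $\nu_d=\nu\circ[-d]$ with $\nu$ the derived Nakayama functor. $\mathbf{J}^d_N$ is the set of $(a_0,\dots,a_d)\in\{1,\dots,N\}^{d+1}$ with $a_{i+1}\geqslant a_i+2$ and $a_d\leqslant a_0+N-2$. A cyclically shifted ordering of $[N]$ is an order $l<l+1<\dots<N<1<\dots<l-1$ for some $l\in[N]$. In $\mathcal{O}$, arithmetic on labels is modulo $N$ (so $a_0+n+2d\equiv a_0-1$) and tuples are implicitly reordered increasingly; $\mathbf{1}=(1,\dots,1)$. Oppermann–Thomas labelling: indecomposables of $\mathcal{U}$ are labelled $U_A$ by tuples $A\in\mathbb{Z}^{d+1}$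 with $a_{i+1}\geqslant a_i+2$ and $a_d+2\leqslant a_0+N$, with $\operatorname{Hom}_{\mathcal{U}}(U_B,U_A)\neq0$ (then one-dimensional) iff $b_0-1<a_0<b_1-1<\dots<b_d-1<a_d<b_0+n+2d$, and $U_A\to U_B\to U_C$ composing non-zero iff $a_0-1<c_0<a_1-1<\dots<a_d-1<c_d<a_0+n+2d$; the projection $\mathcal{U}\to\mathcal{O}$ sends $U_A$ to $O_{A\bmod N}$; $O_A[d]=O_{A-\mathbf{1}}$, and $\operatorname{Hom}_{\mathcal{O}}(O_B,O_A)\neq0$ iff $A-\mathbf{1}$... precisely iff $(B-\mathbf{1})\wr A$ or $A\wr(B-\mathbf{1})$ (after reduction mod $N$ and reordering), where $X\wr Y$ means $x_0<y_0<x_1<\dots<x_d<y_d$. *)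

theory Defs
  imports Main
begin

text \<open>Combinatorial model of the (d+2)-angulated cluster category O of the higher
Auslander algebra A^d_n, via the Oppermann--Thomas labelling.  Tuples
(x_0,...,x_d) are represented as functions nat => int, indices 0..d.\<close>

definition inJ :: "nat \<Rightarrow> int \<Rightarrow> (nat \<Rightarrow> int) \<Rightarrow> bool" where
  "inJ d N a \<longleftrightarrow> (\<forall>i\<le>d. 1 \<le> a i \<and> a i \<le> N)
     \<and> (\<forall>i<d. a (Suc i) \<ge> a i + 2) \<and> a d \<le> a 0 + N - 2"

text \<open>Labels of indecomposables U_X of U = add{M[id]} in D^b(mod A^d_n).\<close>
definition labU :: "nat \<Rightarrow> int \<Rightarrow> (nat \<Rightarrow> int) \<Rightarrow> bool" where
  "labU d N x \<longleftrightarrow> (\<forall>i<d. x (Suc i) \<ge> x i + 2) \<and> x d + 2 \<le> x 0 + N"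

definition redN :: "int \<Rightarrow> int \<Rightarrow> int" where
  "redN N x = (x - 1) mod N + 1"

text \<open>U_X is a lift of O_A: the projection U -> O sends U_X to O_(X mod N)
  (entries reduced mod N and reordered).\<close>
definition liftO :: "nat \<Rightarrow> int \<Rightarrow> (nat \<Rightarrow> int) \<Rightarrow> (nat \<Rightarrow> int) \<Rightarrow> bool" where
  "liftO d N x a \<longleftrightarrow> labU d N x \<and> redN N ` x ` {0..d} = a ` {0..d}"

text \<open>Hom_U(U_X, U_Y) \<noteq> 0 (morphism X -> Y), with n + 2d = N - 1:
  x_0-1 < y_0 < x_1-1 < ... < x_d-1 < y_d < x_0+n+2d.\<close>
definition homU :: "nat \<Rightarrow> int \<Rightarrow> (nat \<Rightarrow> int) \<Rightarrow> (nat \<Rightarrow> int) \<Rightarrow> bool" where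
  "homU d N x y \<longleftrightarrow> (\<forall>i\<le>d. x i - 1 < y i) \<and> (\<forall>i<d. y i < x (Suc i) - 1)
     \<and> y d < x 0 + (N - 1)"

text \<open>The non-zero morphisms U_X -> U_Y -> U_Z compose to a non-zero morphism:
  x_0-1 < z_0 < x_1-1 < ... < x_d-1 < z_d < x_0+n+2d.\<close>
definition compU :: "nat \<Rightarrow> int \<Rightarrow> (nat \<Rightarrow> int) \<Rightarrow> (nat \<Rightarrow> int) \<Rightarrow> (nat \<Rightarrow> int) \<Rightarrow> bool" where
  "compU d N x y z \<longleftrightarrow> homU d N x y \<and> homU d N y z \<and>
     (\<forall>i\<le>d. x i - 1 < z i) \<and> (\<forall>i<d. z i < x (Suc i) - 1) \<and> z d < x 0 + (N - 1)"

text \<open>Hom_O(O_A, O_B) = direct sum over lifts of Hom_U, so it is non-zero iff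
  some lifts have a non-zero U-morphism.\<close>
definition homO :: "nat \<Rightarrow> int \<Rightarrow> (nat \<Rightarrow> int) \<Rightarrow> (nat \<Rightarrow> int) \<Rightarrow> bool" where
  "homO d N a b \<longleftrightarrow> (\<exists>x y. liftO d N x a \<and> liftO d N y b \<and> homU d N x y)"

text \<open>The non-zero morphisms O_A -> O_B -> O_C compose to a non-zero morphism.\<close>
definition compO :: "nat \<Rightarrow> int \<Rightarrow> (nat \<Rightarrow> int) \<Rightarrow> (nat \<Rightarrow> int) \<Rightarrow> (nat \<Rightarrow> int) \<Rightarrow> bool" where
  "compO d N a b c \<longleftrightarrow> (\<exists>x y z. liftO d N x a \<and> liftO d N y b \<and> liftO d N z c
      \<and> compU d N x y z)"

text \<open>Position of (the residue mod N of) x in the cyclically shifted ordering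
  l < l+1 < ... < N < 1 < ... < l-1 of [N].\<close>
definition cpos :: "int \<Rightarrow> int \<Rightarrow> int \<Rightarrow> int" where
  "cpos N l x = (x - l) mod N"

end

theory Submission
  imports Defs
begin

lemma mono_chain:
  fixes f :: "nat \<Rightarrow> int"
  assumes "\<forall>i<d. f i \<le> f (Suc i)" "i \<le> j" "j \<le> d"
  shows "f i \<le> f j"
  using assms(2,3)
proof (induction j)
  case 0 then show ?case by simp
next
  case (Suc j)
  show ?case
  proof (cases "i = Suc j")
    case True then show ?thesis by simp
  next
    case False
    then have "i \<le> j" using Suc.prems by simp
    then have "f i \<le> f j" using Suc by simp
    also have "f j \<le> f (Suc j)" using assms(1) Suc.prems by simp
    finally show ?thesis .
  qed
qed

lemma red_lift:
  fixes N l v :: int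
  assumes "N > 0" "1 \<le> v" "v \<le> N"
  shows "redN N (l + (v - 1 - l) mod N + 1) = v"
proof -
  have "(l + (v - 1 - l) mod N) mod N = (l + (v - 1 - l)) mod N"
    by (simp add: mod_add_right_eq)
  also have "\<dots> = v - 1" using assms by simp
  finally show ?thesis unfolding redN_def by simp
qed

lemma red_lift2:
  fixes N l v :: int
  assumes "N > 0" "1 \<le> v" "v \<le> N"
  shows "redN N (l + (v - l) mod N) = v"
proof -
  have "(l + (v - l) mod N - 1) mod N = (l + (v - l) - 1) mod N"
    by (metis add.commute add_diff_eq diff_add_eq mod_add_right_eq)
  also have "\<dots> = v - 1" using assms by simp
  finally show ?thesis unfolding redN_def by simp
qed

lemma cpos_window:
  fixes N w v :: int
  assumes "N > 0" "w \<le> v" "v < w + N"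
  shows "cpos N (redN N w) v = v - w"
proof -
  have "(v - redN N w) mod N = (v - w) mod N"
  proof -
    have "redN N w = w + N * (- ((w - 1) div N))"
      unfolding redN_def by (simp add: minus_mod_eq_mult_div [symmetric] algebra_simps)
    then have eq: "v - redN N w = (v - w) + N * ((w - 1) div N)" by linarith
    show ?thesis unfolding eq by simp
  qed
  also have "\<dots> = v - w" using assms by simp
  finally show ?thesis unfolding cpos_def .
qed

lemma cpos_red1:
  fixes N l w :: int
  shows "cpos N l (redN N w - 1) = cpos N l (w - 1)"
  unfolding cpos_def redN_def by (simp add: mod_diff_left_eq)

lemma cpos_red2:
  fixes N l w :: int
  shows "cpos N l (redN N w) = cpos N l w"
proof -
  have "((w - 1) mod N + 1 - l) mod N = ((w - 1) + 1 - l) mod N"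
    by (metis add_diff_eq mod_diff_left_eq mod_add_left_eq)
  then show ?thesis unfolding cpos_def redN_def by simp
qed

theorem lemma2p7:
  fixes d n :: nat and N :: int and a b c :: "nat \<Rightarrow> int"
  assumes "d \<ge> 1" and "n \<ge> 1" and "N = int n + 2 * int d + 1"
    and "inJ d N a" and "inJ d N b" and "inJ d N c"
    and "homO d N a b" and "homO d N b c"
  shows "compO d N a b c \<longleftrightarrow>
    (\<exists>l \<in> {1..N}. \<exists>a' b' c' :: nat \<Rightarrow> int.
       a' ` {0..d} = a ` {0..d} \<and> b' ` {0..d} = b ` {0..d} \<and> c' ` {0..d} = c ` {0..d} \<and>
       (\<forall>i\<le>d. cpos N l (a' i - 1) \<le> cpos N l (b' i - 1) \<and>
                cpos N l (b' i - 1) < cpos N l (c' i)) \<and>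
       (\<forall>i<d. cpos N l (c' i) < cpos N l (a' (Suc i) - 1)) \<and>
       cpos N l (c' d) < cpos N l (a' 0 - 1) + N)"
proof
  have Npos: "N > 0" using assms(3) by simp
  assume "compO d N a b c"
  then obtain x y z where lx: "liftO d N x a" and ly: "liftO d N y b" and lz: "liftO d N z c"
    and cu: "compU d N x y z" unfolding compO_def by blast
  have xm: "\<forall>i<d. x i \<le> x (Suc i)" using lx unfolding liftO_def labU_def by force
  have zm: "\<forall>i<d. z i \<le> z (Suc i)" using lz unfolding liftO_def labU_def by force
  have hxy: "homU d N x y" and hyz: "homU d N y z" using cu unfolding compU_def by auto
  have xz1: "\<forall>i\<le>d. x i - 1 < z i" and xz2: "\<forall>i<d. z i < x (Suc i) - 1"
    and xz3: "z d < x 0 + (N - 1)" using cu unfolding compU_def by auto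
  have xy1: "\<forall>i\<le>d. x i - 1 < y i" using hxy unfolding homU_def by auto
  have yz1: "\<forall>i\<le>d. y i - 1 < z i" using hyz unfolding homU_def by auto
  define w where "w = x 0 - 1"
  define l where "l = redN N w"
  have lN: "l \<in> {1..N}" unfolding l_def redN_def
    using pos_mod_bound[OF Npos, of "w-1"] pos_mod_sign[OF Npos, of "w-1"] by simp
  have x0i: "\<And>i. i \<le> d \<Longrightarrow> x 0 \<le> x i" using mono_chain[OF xm] by simp
  have zid: "\<And>i. i \<le> d \<Longrightarrow> z i \<le> z d" using mono_chain[OF zm] by simp
  have cx: "\<And>i. i \<le> d \<Longrightarrow> cpos N l (x i - 1) = x i - 1 - w"
  proof -
    fix i assume i: "i \<le> d"
    have "x i - 1 < z i" "y i - 1 < z i" "x i - 1 < y i" using xz1 yz1 xy1 i by auto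
    then show "cpos N l (x i - 1) = x i - 1 - w" unfolding l_def
      using cpos_window[OF Npos] x0i[OF i] zid[OF i] xz3 unfolding w_def by simp
  qed
  have cy: "\<And>i. i \<le> d \<Longrightarrow> cpos N l (y i - 1) = y i - 1 - w"
  proof -
    fix i assume i: "i \<le> d"
    have "x i - 1 < z i" "y i - 1 < z i" "x i - 1 < y i" using xz1 yz1 xy1 i by auto
    then show "cpos N l (y i - 1) = y i - 1 - w" unfolding l_def
      using cpos_window[OF Npos] x0i[OF i] zid[OF i] xz3 unfolding w_def by simp
  qed
  have cz: "\<And>i. i \<le> d \<Longrightarrow> cpos N l (z i) = z i - w"
  proof -
    fix i assume i: "i \<le> d"
    have "x i - 1 < z i" "y i - 1 < z i" "x i - 1 < y i" using xz1 yz1 xy1 i by auto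
    then show "cpos N l (z i) = z i - w" unfolding l_def
      using cpos_window[OF Npos] x0i[OF i] zid[OF i] xz3 unfolding w_def by simp
  qed
  define a' where "a' = (\<lambda>i. redN N (x i))"
  define b' where "b' = (\<lambda>i. redN N (y i))"
  define c' where "c' = (\<lambda>i. redN N (z i))"
  show "\<exists>l \<in> {1..N}. \<exists>a' b' c' :: nat \<Rightarrow> int.
       a' ` {0..d} = a ` {0..d} \<and> b' ` {0..d} = b ` {0..d} \<and> c' ` {0..d} = c ` {0..d} \<and>
       (\<forall>i\<le>d. cpos N l (a' i - 1) \<le> cpos N l (b' i - 1) \<and>
                cpos N l (b' i - 1) < cpos N l (c' i)) \<and>
       (\<forall>i<d. cpos N l (c' i) < cpos N l (a' (Suc i) - 1)) \<and>
       cpos N l (c' d) < cpos N l (a' 0 - 1) + N"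
  proof (intro bexI[OF _ lN] exI conjI allI impI)
    show "a' ` {0..d} = a ` {0..d}" using lx unfolding liftO_def a'_def by (simp add: image_image)
    show "b' ` {0..d} = b ` {0..d}" using ly unfolding liftO_def b'_def by (simp add: image_image)
    show "c' ` {0..d} = c ` {0..d}" using lz unfolding liftO_def c'_def by (simp add: image_image)
    fix i
    {
      assume i: "i \<le> d"
      show "cpos N l (a' i - 1) \<le> cpos N l (b' i - 1)"
        unfolding a'_def b'_def cpos_red1 using cx[OF i] cy[OF i] xy1[rule_format, OF i] by simp
      show "cpos N l (b' i - 1) < cpos N l (c' i)"
        unfolding c'_def b'_def cpos_red1 cpos_red2 using cz[OF i] cy[OF i] yz1[rule_format, OF i] by simp
    }
    assume i: "i < d"
    show "cpos N l (c' i) < cpos N l (a' (Suc i) - 1)"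
      unfolding c'_def a'_def cpos_red1 cpos_red2 using cz[of i] cx[of "Suc i"] xz2[rule_format, OF i] i by simp
  next
    show "cpos N l (c' d) < cpos N l (a' 0 - 1) + N"
      unfolding cpos_def using Npos by (smt (verit) pos_mod_bound pos_mod_sign)
  qed
next
  have Npos: "N > 0" using assms(3) by simp
  assume "\<exists>l \<in> {1..N}. \<exists>a' b' c' :: nat \<Rightarrow> int.
       a' ` {0..d} = a ` {0..d} \<and> b' ` {0..d} = b ` {0..d} \<and> c' ` {0..d} = c ` {0..d} \<and>
       (\<forall>i\<le>d. cpos N l (a' i - 1) \<le> cpos N l (b' i - 1) \<and>
                cpos N l (b' i - 1) < cpos N l (c' i)) \<and>
       (\<forall>i<d. cpos N l (c' i) < cpos N l (a' (Suc i) - 1)) \<and>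
       cpos N l (c' d) < cpos N l (a' 0 - 1) + N"
  then show "compO d N a b c"
  proof (elim bexE exE conjE)
  fix l a' b' c' assume ia: "a' ` {0..d} = a ` {0..d}" and ib: "b' ` {0..d} = b ` {0..d}"
    and ic: "c' ` {0..d} = c ` {0..d}"
    and ch1: "\<forall>i\<le>d. cpos N l (a' i - 1) \<le> cpos N l (b' i - 1) \<and>
                cpos N l (b' i - 1) < cpos N l (c' i)"
    and ch2: "\<forall>i<d. cpos N l (c' i) < cpos N l (a' (Suc i) - 1)"
    and "cpos N l (c' d) < cpos N l (a' 0 - 1) + N" and "l \<in> {1..N}"
  define x where "x = (\<lambda>i. l + cpos N l (a' i - 1) + 1)"
  define y where "y = (\<lambda>i. l + cpos N l (b' i - 1) + 1)"
  define z where "z = (\<lambda>i. l + cpos N l (c' i))"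
  have rng: "\<And>v. 0 \<le> cpos N l v \<and> cpos N l v < N" unfolding cpos_def using Npos by simp
  have ra: "\<And>i. i \<le> d \<Longrightarrow> 1 \<le> a' i \<and> a' i \<le> N"
  proof -
    fix i assume "i \<le> d"
    then have "a' i \<in> a ` {0..d}" using ia by auto
    then show "1 \<le> a' i \<and> a' i \<le> N" using assms(4) unfolding inJ_def by auto
  qed
  have rb: "\<And>i. i \<le> d \<Longrightarrow> 1 \<le> b' i \<and> b' i \<le> N"
  proof -
    fix i assume "i \<le> d"
    then have "b' i \<in> b ` {0..d}" using ib by auto
    then show "1 \<le> b' i \<and> b' i \<le> N" using assms(5) unfolding inJ_def by auto
  qed
  have rc: "\<And>i. i \<le> d \<Longrightarrow> 1 \<le> c' i \<and> c' i \<le> N"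
  proof -
    fix i assume "i \<le> d"
    then have "c' i \<in> c ` {0..d}" using ic by auto
    then show "1 \<le> c' i \<and> c' i \<le> N" using assms(6) unfolding inJ_def by auto
  qed
  have e1: "\<forall>i\<le>d. x i \<le> y i"
  proof (intro allI impI)
    fix i assume "i \<le> d"
    then have "cpos N l (a' i - 1) \<le> cpos N l (b' i - 1)" using ch1 by blast
    then show "x i \<le> y i" unfolding x_def y_def by simp
  qed
  have e2: "\<forall>i\<le>d. y i \<le> z i"
  proof (intro allI impI)
    fix i assume "i \<le> d"
    then have "cpos N l (b' i - 1) < cpos N l (c' i)" using ch1 by blast
    then show "y i \<le> z i" unfolding z_def y_def by simp
  qed
  have e3: "\<forall>i<d. z i < x (Suc i) - 1"
  proof (intro allI impI)
    fix i assume "i < d"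
    then have "cpos N l (c' i) < cpos N l (a' (Suc i) - 1)" using ch2 by blast
    then show "z i < x (Suc i) - 1" unfolding z_def x_def by simp
  qed
  have e4: "\<forall>i. l + 1 \<le> x i" unfolding x_def using rng by (metis add_le_cancel_left add_right_mono le_add_same_cancel1)
  have e5: "\<forall>i. z i < l + N" unfolding z_def using rng by (metis add_less_cancel_left)
  have e6: "\<forall>i. l + 1 \<le> y i" unfolding y_def using rng by (metis add_le_cancel_left add_right_mono le_add_same_cancel1)
  have e7: "\<forall>i. l \<le> z i" unfolding z_def using rng by (metis le_add_same_cancel1)
  have lx: "liftO d N x a"
    unfolding liftO_def labU_def
  proof (intro conjI allI impI)
    fix i assume i: "i < d"
    show "x i + 2 \<le> x (Suc i)" using e1[rule_format, of i] e2[rule_format, of i] e3[rule_format, OF i] e1[rule_format, of "Suc i"] i by simp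
  next
    show "x d + 2 \<le> x 0 + N" using e1[rule_format, of d] e2[rule_format, of d] e4[rule_format, of 0] e5[rule_format, of d] by simp
  next
    have "redN N ` x ` {0..d} = a' ` {0..d}"
      unfolding image_image x_def using red_lift[OF Npos] ra
      by (intro image_cong) (auto simp: cpos_def)
    then show "redN N ` x ` {0..d} = a ` {0..d}" using ia by simp
  qed
  have ly: "liftO d N y b"
    unfolding liftO_def labU_def
  proof (intro conjI allI impI)
    fix i assume i: "i < d"
    show "y i + 2 \<le> y (Suc i)" using e1[rule_format, of "Suc i"] e2[rule_format, of i] e3[rule_format, OF i] i by simp
  next
    show "y d + 2 \<le> y 0 + N" using e2[rule_format, of d] e6[rule_format, of 0] e5[rule_format, of d] by simp
  next
    have "redN N ` y ` {0..d} = b' ` {0..d}"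
      unfolding image_image y_def using red_lift[OF Npos] rb
      by (intro image_cong) (auto simp: cpos_def)
    then show "redN N ` y ` {0..d} = b ` {0..d}" using ib by simp
  qed
  have lz: "liftO d N z c"
    unfolding liftO_def labU_def
  proof (intro conjI allI impI)
    fix i assume i: "i < d"
    show "z i + 2 \<le> z (Suc i)" using e1[rule_format, of "Suc i"] e2[rule_format, of "Suc i"] e3[rule_format, OF i] i by simp
  next
    show "z d + 2 \<le> z 0 + N" using e1[rule_format, of 0] e2[rule_format, of 0] e4[rule_format, of 0] e5[rule_format, of d] by simp
  next
    have "redN N ` z ` {0..d} = c' ` {0..d}"
      unfolding image_image z_def using red_lift2[OF Npos] rc
      by (intro image_cong) (auto simp: cpos_def)
    then show "redN N ` z ` {0..d} = c ` {0..d}" using ic by simp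
  qed
  have cu: "compU d N x y z"
    unfolding compU_def homU_def
  proof (intro conjI allI impI)
    fix i
    { assume i: "i \<le> d"
      show "x i - 1 < y i" "y i - 1 < z i" "x i - 1 < z i"
        using e1[rule_format, OF i] e2[rule_format, OF i] by auto }
    { assume i: "i < d"
      show "y i < x (Suc i) - 1" "z i < y (Suc i) - 1" "z i < x (Suc i) - 1"
        using e2[rule_format, of i] e3[rule_format, OF i] e1[rule_format, of "Suc i"] i by auto }
  next
    show "y d < x 0 + (N - 1)" "z d < y 0 + (N - 1)" "z d < x 0 + (N - 1)"
      using e2[rule_format, of d] e4[rule_format, of 0] e6[rule_format, of 0] e5[rule_format, of d] by auto
  qed
  show "compO d N a b c" unfolding compO_def using lx ly lz cu by blast
qed
qed

end
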